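(* Let $G$ be any GP 2 host graph in which every node is marked grey and is not a root and every edge is unmarked, with $n$ nodes and $m$ edges. When the GP 2 program is-connected is executed on $G$ (via the GP 2-to-C compiler, under the cost model below), it terminates in time $\mathrm{O}(n+m)$, i.e. linear in the size of $G$.
   Context: GP 2 semantics. Host graphs are finite directed graphs (parallel edges and loops allowed); every node and edge carries a label (a list of integers and strings) and a mark: nodes are unmarked or red, green, blue or grey; edges are unmarked or red, green, blue or dashed. Some nodes are roots. A rule consists of a left-hand graph $L$ and a right-hand graph $R$ sharing an interface of nodes; labels may contain variables; a rule item with mark "any" matches any mark. A rule is applied by finding an injective morphism from $L$ into the host graph compatible with labels and marks, mapping roots of $L$ to roots, satisfying the dangling condition and the rule's condition, then modifying the matched items as prescribed by $R$. Commands: a rule set call applies one applicable rule and fails if none applies; $P;Q$ is sequencing; $P!$ iterates $P$ until it fails (returning the graph on which $P$ was last entered; break exits the loop); "try $C$ then $P$ else $Q$" runs $C$ and continues with $P$ on its result if it succeeded, else runs $Q$ on the original graph; "if $C$ then $P$ else $Q$" runs $C$ on a copy then $P$ or $Q$ on the original; fail causes failure. Cost model (updated GP 2-to-C compiler). The generated code stores host nodes in separate linked lists per node mark, keeps a list of roots, and for each node stores a two-dimensional array of linked lists of incident edges indexed by edge mark (unmarked, dashed, red, green, blue) and orientation (incoming, outgoing, loop). Each of the following elementary operations takes constant time: fetch the first/next host node with a given mark; fetch the first/next root node; given a node, fetch the first/next incoming, outgoing or loop edge with a given mark; read in-degree, out-degree, mark, root status, source, target; set/clear/test a "matched" flag.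 Rule matching is a search using these operations; once a match is found, completing a rule application (for rules that only change marks, roots or add host labels) takes constant time. Running time is the total cost of all operations performed; the size of $G$ is $n+m$. The program is-connected (variables x,y,z of type list; labels unchanged by all rules): Main = try init then (DFS!; Check); DFS = FORWARD!; try back else break; FORWARD = next_edge; {move, ignore}; Check = if match then fail. Rule edges between nodes 1 and 2 match host edges in either direction. - init: a grey non-root node becomes a blue root. - match: a grey node; no change. - next_edge: blue root 1, node 2 of any mark, unmarked edge between them; edge becomes red. - ignore: blue root 1, blue node 2, red edge between; edge becomes blue. - move: blue root 1, grey node 2, red edge between; node 1 becomes a blue non-root, node 2 a blue root, edge dashed. - back: blue non-root 1, blue root 2, dashed edge between; node 1 becomes a root, node 2 a non-root (both blue), edge blue. *)

theory Defs
  imports Main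
begin

datatype atom = AInt int | AStr string
type_synonym label = "atom list"

datatype nmark = NUnmarked | NRed | NGreen | NBlue | NGrey
datatype emark = EUnmarked | EDashed | ERed | EGreen | EBlue

record hgraph =
  nodes :: "nat set"
  edges :: "nat set"
  src   :: "nat \<Rightarrow> nat"
  tgt   :: "nat \<Rightarrow> nat"
  nlab  :: "nat \<Rightarrow> label"
  elab  :: "nat \<Rightarrow> label"
  nmk   :: "nat \<Rightarrow> nmark"
  emk   :: "nat \<Rightarrow> emark"
  roots :: "nat set"

definition wf_hgraph :: "hgraph \<Rightarrow> bool" where
  "wf_hgraph G \<longleftrightarrow> finite (nodes G) \<and> finite (edges G)
     \<and> (\<forall>e\<in>edges G. src G e \<in> nodes G \<and> tgt G e \<in> nodes G)
     \<and> roots G \<subseteq> nodes G"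

section \<open>Rules of the program (labels are matched by list variables and kept)\<close>

text \<open>
  NodeRule m m' r': left-hand side a single unrooted node of mark m; it becomes
  marked m'; r' = Some b sets its root status to b, None leaves it unchanged.

  EdgeRule rm om em rm' om' em' rr' or': left-hand side a root node (mark rm),
  a distinct unrooted node (mark om; None = any) and an edge of mark em between
  them, in either direction.  Afterwards the root node gets mark rm' and root
  status rr', the other node gets mark om' (None = unchanged, used with any) and
  root status or' (None = unchanged), the edge gets mark em'.
\<close>
datatype rule =
    NodeRule nmark nmark "bool option"
  | EdgeRule nmark "nmark option" emark nmark "nmark option" emark bool "bool option"

datatype mtch = MNode nat | MEdge nat nat  (* root node, host edge *)

definition mark_ok :: "nmark option \<Rightarrow> nmark \<Rightarrow> bool" where
  "mark_ok om m = (case om of None \<Rightarrow> m \<noteq> NUnmarked | Some m0 \<Rightarrow> m = m0)"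

definition set_root :: "bool \<Rightarrow> nat \<Rightarrow> nat set \<Rightarrow> nat set" where
  "set_root b v R = (if b then insert v R else R - {v})"

definition other_end :: "hgraph \<Rightarrow> nat \<Rightarrow> nat \<Rightarrow> nat" where
  "other_end G r e = (if src G e = r then tgt G e else src G e)"

fun apply_rule :: "rule \<Rightarrow> hgraph \<Rightarrow> mtch \<Rightarrow> hgraph" where
  "apply_rule (NodeRule m m' r') G (MNode v) =
     G\<lparr> nmk := (nmk G)(v := m'),
        roots := (case r' of None \<Rightarrow> roots G | Some b \<Rightarrow> set_root b v (roots G)) \<rparr>"
| "apply_rule (EdgeRule rm om em rm' om' em' rr' or') G (MEdge r e) =
     (let w = other_end G r e in
      G\<lparr> nmk := ((nmk G)(r := rm'))(w := (case om' of None \<Rightarrow> nmk G w | Some m \<Rightarrow> m)),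
         emk := (emk G)(e := em'),
         roots := (case or' of None \<Rightarrow> (\<lambda>R. R) | Some b \<Rightarrow> set_root b w)
                    (set_root rr' r (roots G)) \<rparr>)"
| "apply_rule _ G _ = G"

text \<open>
  The order in which the generated code walks through its linked lists is not
  fixed; it is supplied by an arbitrary scheduler.  A scheduler (en, ee) gives, for
  every point in time t (the number of elementary operations performed so far)
  and every finite set of nodes (resp. edges) forming a list, an enumeration
  of that list.  The theorem quantifies over all schedulers.
\<close>
type_synonym sched = "(nat \<Rightarrow> nat set \<Rightarrow> nat list) \<times> (nat \<Rightarrow> nat set \<Rightarrow> nat list)"

definition valid_sched :: "sched \<Rightarrow> bool" where
  "valid_sched \<sigma> \<longleftrightarrow>
     (\<forall>t S. finite S \<longrightarrow> set (fst \<sigma> t S) = S \<and> distinct (fst \<sigma> t S)) \<and>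
     (\<forall>t S. finite S \<longrightarrow> set (snd \<sigma> t S) = S \<and> distinct (snd \<sigma> t S))"

text \<open>Walk through a list; each inspected element costs k operations, and
  running off the end costs one fetch (returning null).\<close>
fun scan :: "nat \<Rightarrow> ('a \<Rightarrow> bool) \<Rightarrow> 'a list \<Rightarrow> 'a option \<times> nat" where
  "scan k ok [] = (None, 1)"
| "scan k ok (x # xs) =
     (if ok x then (Some x, k) else (case scan k ok xs of (r, c) \<Rightarrow> (r, k + c)))"

text \<open>Non-loop outgoing / incoming edges of a node with a given mark (loops are
  kept in a separate list).\<close>
definition out_list :: "hgraph \<Rightarrow> nat \<Rightarrow> emark \<Rightarrow> nat set" where
  "out_list G v m = {e \<in> edges G. src G e = v \<and> tgt G e \<noteq> v \<and> emk G e = m}"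

definition in_list :: "hgraph \<Rightarrow> nat \<Rightarrow> emark \<Rightarrow> nat set" where
  "in_list G v m = {e \<in> edges G. tgt G e = v \<and> src G e \<noteq> v \<and> emk G e = m}"

text \<open>Trying a root r as image of the rooted rule node: read its mark; if it
  fits, set its matched flag (1), walk the outgoing then the incoming edges of
  the required mark (per edge: fetch, read the other end, test its matched
  flag, read its mark = 4 operations), and clear the flag on failure (1).\<close>
definition try_root :: "sched \<Rightarrow> hgraph \<Rightarrow> nat \<Rightarrow> nmark \<Rightarrow> nmark option \<Rightarrow> emark
                        \<Rightarrow> nat \<Rightarrow> nat option \<times> nat" where
  "try_root \<sigma> G t rm om em r =
     (if nmk G r \<noteq> rm then (None, 0) else
      (case scan 4 (\<lambda>e. tgt G e \<noteq> r \<and> mark_ok om (nmk G (tgt G e)))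
                 (snd \<sigma> t (out_list G r em)) of
         (Some e, c1) \<Rightarrow> (Some e, 1 + c1)
       | (None, c1) \<Rightarrow>
          (case scan 4 (\<lambda>e. src G e \<noteq> r \<and> mark_ok om (nmk G (src G e)))
                     (snd \<sigma> t (in_list G r em)) of
             (Some e, c2) \<Rightarrow> (Some e, 1 + c1 + c2)
           | (None, c2) \<Rightarrow> (None, 1 + c1 + c2 + 1))))"

text \<open>Walk the root list: per root one fetch and one mark read (2).\<close>
fun search_roots :: "(nat \<Rightarrow> nat option \<times> nat) \<Rightarrow> nat list \<Rightarrow> mtch option \<times> nat" where
  "search_roots tr [] = (None, 1)"
| "search_roots tr (r # rs) =
     (case tr r of
        (Some e, c) \<Rightarrow> (Some (MEdge r e), 2 + c)
      | (None, c) \<Rightarrow> (case search_roots tr rs of (res, c') \<Rightarrow> (res, 2 + c + c')))"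

text \<open>A single unrooted node of
  mark m is matched by fetching the first node of the list of m-marked nodes.\<close>
fun search :: "sched \<Rightarrow> hgraph \<Rightarrow> nat \<Rightarrow> rule \<Rightarrow> mtch option \<times> nat" where
  "search \<sigma> G t (NodeRule m m' r') =
     (case fst \<sigma> t {v \<in> nodes G. nmk G v = m} of
        [] \<Rightarrow> (None, 1)
      | v # _ \<Rightarrow> (Some (MNode v), 1))"
| "search \<sigma> G t (EdgeRule rm om em rm' om' em' rr' or') =
     search_roots (try_root \<sigma> G t rm om em) (fst \<sigma> t (roots G))"

text \<open>Rule set call: try the rules in turn; completing an application costs 1.\<close>
fun call_rules :: "sched \<Rightarrow> hgraph \<Rightarrow> nat \<Rightarrow> rule list \<Rightarrow> hgraph option \<times> nat" where
  "call_rules \<sigma> G t [] = (None, 0)"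
| "call_rules \<sigma> G t (\<rho> # \<rho>s) =
     (case search \<sigma> G t \<rho> of
        (Some mt, c) \<Rightarrow> (Some (apply_rule \<rho> G mt), c + 1)
      | (None, c) \<Rightarrow> (case call_rules \<sigma> G (t + c) \<rho>s of (res, c') \<Rightarrow> (res, c + c')))"

datatype cmd = Call "rule list" | Seq cmd cmd | Loop cmd
  | Try cmd cmd cmd | If cmd cmd cmd | Skip | Fail | Break

datatype outcome = Ok hgraph | Failed | Brk hgraph

text \<open>exec \<sigma> P G t res t' k: running P on G, starting at time t, yields res at
  time t'; k is the number of rule applications performed and not undone (each
  is recorded and costs one operation to undo when the graph is restored).\<close>
inductive exec :: "sched \<Rightarrow> cmd \<Rightarrow> hgraph \<Rightarrow> nat \<Rightarrow> outcome \<Rightarrow> nat \<Rightarrow> nat \<Rightarrow> bool"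
  for \<sigma> :: sched where
  call_ok: "call_rules \<sigma> G t rs = (Some G', c) \<Longrightarrow> exec \<sigma> (Call rs) G t (Ok G') (t + c) 1"
| call_fail: "call_rules \<sigma> G t rs = (None, c) \<Longrightarrow> exec \<sigma> (Call rs) G t Failed (t + c) 0"
| skip: "exec \<sigma> Skip G t (Ok G) t 0"
| fail: "exec \<sigma> Fail G t Failed t 0"
| break: "exec \<sigma> Break G t (Brk G) t 0"
| seq_ok: "exec \<sigma> P G t (Ok G1) t1 k1 \<Longrightarrow> exec \<sigma> Q G1 t1 res t2 k2 \<Longrightarrow>
           exec \<sigma> (Seq P Q) G t res t2 (k1 + k2)"
| seq_fail: "exec \<sigma> P G t Failed t1 k1 \<Longrightarrow> exec \<sigma> (Seq P Q) G t Failed t1 k1"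
| seq_brk: "exec \<sigma> P G t (Brk G1) t1 k1 \<Longrightarrow> exec \<sigma> (Seq P Q) G t (Brk G1) t1 k1"
| loop_ok: "exec \<sigma> P G t (Ok G1) t1 k1 \<Longrightarrow> exec \<sigma> (Loop P) G1 t1 res t2 k2 \<Longrightarrow>
           exec \<sigma> (Loop P) G t res t2 (k1 + k2)"
| loop_fail: "exec \<sigma> P G t Failed t1 k1 \<Longrightarrow> exec \<sigma> (Loop P) G t (Ok G) (t1 + k1) 0"
| loop_brk: "exec \<sigma> P G t (Brk G1) t1 k1 \<Longrightarrow> exec \<sigma> (Loop P) G t (Ok G1) t1 k1"
| try_ok: "exec \<sigma> C G t (Ok G1) t1 k1 \<Longrightarrow> exec \<sigma> P G1 t1 res t2 k2 \<Longrightarrow>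
           exec \<sigma> (Try C P Q) G t res t2 (k1 + k2)"
| try_fail: "exec \<sigma> C G t Failed t1 k1 \<Longrightarrow> exec \<sigma> Q G (t1 + k1) res t2 k2 \<Longrightarrow>
           exec \<sigma> (Try C P Q) G t res t2 k2"
| try_brk: "exec \<sigma> C G t (Brk G1) t1 k1 \<Longrightarrow> exec \<sigma> (Try C P Q) G t (Brk G1) t1 k1"
| if_ok: "exec \<sigma> C G t (Ok G1) t1 k1 \<Longrightarrow> exec \<sigma> P G (t1 + k1) res t2 k2 \<Longrightarrow>
           exec \<sigma> (If C P Q) G t res t2 k2"
| if_fail: "exec \<sigma> C G t Failed t1 k1 \<Longrightarrow> exec \<sigma> Q G (t1 + k1) res t2 k2 \<Longrightarrow>
           exec \<sigma> (If C P Q) G t res t2 k2"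
| if_brk: "exec \<sigma> C G t (Brk G1) t1 k1 \<Longrightarrow> exec \<sigma> (If C P Q) G t (Brk G1) t1 k1"

definition r_init :: rule where "r_init = NodeRule NGrey NBlue (Some True)"
definition r_match :: rule where "r_match = NodeRule NGrey NGrey None"
definition r_next_edge :: rule where
  "r_next_edge = EdgeRule NBlue None EUnmarked NBlue None ERed True None"
definition r_ignore :: rule where
  "r_ignore = EdgeRule NBlue (Some NBlue) ERed NBlue (Some NBlue) EBlue True None"
definition r_move :: rule where
  "r_move = EdgeRule NBlue (Some NGrey) ERed NBlue (Some NBlue) EDashed False (Some True)"
text \<open>back: rooted node is node 2 of the paper's rule; the unrooted node 1
  becomes a root, node 2 a non-root.\<close>
definition r_back :: rule where
  "r_back = EdgeRule NBlue (Some NBlue) EDashed NBlue (Some NBlue) EBlue False (Some True)"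

definition FORWARD :: cmd where
  "FORWARD = Seq (Call [r_next_edge]) (Call [r_move, r_ignore])"
definition DFS :: cmd where
  "DFS = Seq (Loop FORWARD) (Try (Call [r_back]) Skip Break)"
definition Check :: cmd where
  "Check = If (Call [r_match]) Fail Skip"
definition is_connected :: cmd where
  "is_connected = Try (Call [r_init]) (Seq (Loop DFS) Check) Skip"

end

theory Submission
  imports Defs
begin

lemma scan_cost: "snd (scan k ok xs) \<le> k * length xs + 1"
  by (induction xs) (auto split: prod.split)

lemma scan_cost_ok: "\<forall>x\<in>set xs. ok x \<Longrightarrow> snd (scan k ok xs) \<le> k + 1"
  by (cases xs) auto

lemma scan_some: "fst (scan k ok xs) = Some x \<Longrightarrow> x \<in> set xs \<and> ok x"
  by (induction xs) (auto split: prod.splits if_splits)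

lemma single_list: assumes a: "set xs = {r}" "distinct xs" shows "xs = [r]"
proof (cases xs)
  case Nil
  then show ?thesis using a by auto
next
  case (Cons x ys)
  then have "x = r" using a by auto
  moreover have "set ys \<subseteq> {r}" using a Cons by auto
  moreover have "r \<notin> set ys" using a Cons \<open>x = r\<close> by auto
  ultimately have "set ys = {}" by (metis all_not_in_conv singletonD subsetD)
  then show ?thesis using Cons \<open>x = r\<close> by simp
qed

lemma scan_some': "scan k ok xs = (Some x, c) \<Longrightarrow> x \<in> set xs \<and> ok x"
  using scan_some[of k ok xs x] by simp

lemma vs_fst: "valid_sched \<sigma> \<Longrightarrow> finite S \<Longrightarrow> set (fst \<sigma> t S) = S \<and> distinct (fst \<sigma> t S)"
  unfolding valid_sched_def by blast

lemma vs_snd: "valid_sched \<sigma> \<Longrightarrow> finite S \<Longrightarrow> set (snd \<sigma> t S) = S \<and> distinct (snd \<sigma> t S)"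
  unfolding valid_sched_def by blast

lemma fin_out: "finite (edges G) \<Longrightarrow> finite (out_list G r m)"
  unfolding out_list_def by simp

lemma fin_in: "finite (edges G) \<Longrightarrow> finite (in_list G r m)"
  unfolding in_list_def by simp

lemma search_roots_single:
  "search_roots tr [r] = (case tr r of (Some e, c) \<Rightarrow> (Some (MEdge r e), 2 + c) | (None, c) \<Rightarrow> (None, 3 + c))"
  by (simp split: prod.split option.split)

lemma search_edge_eq:
  assumes "valid_sched \<sigma>" "roots G = {r}"
  shows "search \<sigma> G t (EdgeRule rm om em rm' om' em' rr' or') = search_roots (try_root \<sigma> G t rm om em) [r]"
proof -
  have "fst \<sigma> t {r} = [r]" using vs_fst[OF assms(1), of "{r}" t] single_list by auto
  then show ?thesis using assms(2) by simp
qed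

lemma try_root_some:
  assumes "try_root \<sigma> G t rm om em r = (Some e, c)"
  shows "nmk G r = rm \<and> ((e \<in> set (snd \<sigma> t (out_list G r em)) \<and> tgt G e \<noteq> r \<and> mark_ok om (nmk G (tgt G e)))
     \<or> (e \<in> set (snd \<sigma> t (in_list G r em)) \<and> src G e \<noteq> r \<and> mark_ok om (nmk G (src G e))))"
  using assms unfolding try_root_def
  by (auto split: prod.splits option.splits if_splits dest!: scan_some')

lemma try_root_cost:
  "snd (try_root \<sigma> G t rm om em r) \<le> 2
     + snd (scan 4 (\<lambda>e. tgt G e \<noteq> r \<and> mark_ok om (nmk G (tgt G e))) (snd \<sigma> t (out_list G r em)))
     + snd (scan 4 (\<lambda>e. src G e \<noteq> r \<and> mark_ok om (nmk G (src G e))) (snd \<sigma> t (in_list G r em)))"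
  unfolding try_root_def
  by (auto split: prod.splits option.splits if_splits)

lemma edge_search_some:
  assumes vs: "valid_sched \<sigma>" and wf: "wf_hgraph G" and rt: "roots G = {r}"
    and s: "search \<sigma> G t (EdgeRule rm om em rm' om' em' rr' or') = (Some mt, c)"
  shows "\<exists>e. mt = MEdge r e \<and> e \<in> edges G \<and> emk G e = em \<and> nmk G r = rm
     \<and> other_end G r e \<noteq> r \<and> mark_ok om (nmk G (other_end G r e)) \<and> other_end G r e \<in> nodes G
     \<and> r \<in> nodes G \<and> (src G e = r \<and> tgt G e = other_end G r e \<or> tgt G e = r \<and> src G e = other_end G r e)"
proof -
  have fe: "finite (edges G)" using wf unfolding wf_hgraph_def by blast
  have s2: "search_roots (try_root \<sigma> G t rm om em) [r] = (Some mt, c)"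
    using s search_edge_eq[OF vs rt] by metis
  then obtain e c0 where tr: "try_root \<sigma> G t rm om em r = (Some e, c0)" and mt: "mt = MEdge r e"
    unfolding search_roots_single by (auto split: prod.splits option.splits)
  note tr2 = try_root_some[OF tr]
  have so: "set (snd \<sigma> t (out_list G r em)) = out_list G r em"
    using vs_snd[OF vs fin_out[OF fe]] by blast
  have si: "set (snd \<sigma> t (in_list G r em)) = in_list G r em"
    using vs_snd[OF vs fin_in[OF fe]] by blast
  have tr3: "nmk G r = rm \<and> ((e \<in> out_list G r em \<and> tgt G e \<noteq> r \<and> mark_ok om (nmk G (tgt G e)))
     \<or> (e \<in> in_list G r em \<and> src G e \<noteq> r \<and> mark_ok om (nmk G (src G e))))"
    using tr2 unfolding so si .
  have rn: "r \<in> nodes G" using rt wf unfolding wf_hgraph_def by auto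
  show ?thesis
    using tr3 mt wf rn unfolding out_list_def in_list_def other_end_def wf_hgraph_def
    by auto
qed

lemma edge_search_cost:
  assumes vs: "valid_sched \<sigma>" and wf: "wf_hgraph G" and rt: "roots G = {r}"
    and s: "search \<sigma> G t (EdgeRule rm om em rm' om' em' rr' or') = (res, c)"
  shows "c \<le> 7 + 4 * card (out_list G r em) + 4 * card (in_list G r em)"
    and "(\<forall>e\<in>out_list G r em. mark_ok om (nmk G (tgt G e))) \<Longrightarrow>
         (\<forall>e\<in>in_list G r em. mark_ok om (nmk G (src G e))) \<Longrightarrow> c \<le> 15"
proof -
  have fe: "finite (edges G)" using wf unfolding wf_hgraph_def by blast
  have s2: "search_roots (try_root \<sigma> G t rm om em) [r] = (res, c)"
    using s search_edge_eq[OF vs rt] by metis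
  then have cc: "c \<le> 3 + snd (try_root \<sigma> G t rm om em r)"
    unfolding search_roots_single by (auto split: prod.splits option.splits)
  have so: "set (snd \<sigma> t (out_list G r em)) = out_list G r em" "distinct (snd \<sigma> t (out_list G r em))"
    using vs_snd[OF vs fin_out[OF fe]] by blast+
  have si: "set (snd \<sigma> t (in_list G r em)) = in_list G r em" "distinct (snd \<sigma> t (in_list G r em))"
    using vs_snd[OF vs fin_in[OF fe]] by blast+
  have l1: "length (snd \<sigma> t (out_list G r em)) = card (out_list G r em)"
    using so distinct_card by metis
  have l2: "length (snd \<sigma> t (in_list G r em)) = card (in_list G r em)"
    using si distinct_card by metis
  show "c \<le> 7 + 4 * card (out_list G r em) + 4 * card (in_list G r em)"
    using cc try_root_cost[of \<sigma> G t rm om em r]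
      scan_cost[of 4 "\<lambda>e. tgt G e \<noteq> r \<and> mark_ok om (nmk G (tgt G e))" "snd \<sigma> t (out_list G r em)"]
      scan_cost[of 4 "\<lambda>e. src G e \<noteq> r \<and> mark_ok om (nmk G (src G e))" "snd \<sigma> t (in_list G r em)"]
      l1 l2
    by linarith
  assume a1: "\<forall>e\<in>out_list G r em. mark_ok om (nmk G (tgt G e))"
     and a2: "\<forall>e\<in>in_list G r em. mark_ok om (nmk G (src G e))"
  have o1: "\<forall>e\<in>set (snd \<sigma> t (out_list G r em)). tgt G e \<noteq> r \<and> mark_ok om (nmk G (tgt G e))"
    using a1 so unfolding out_list_def by auto
  have o2: "\<forall>e\<in>set (snd \<sigma> t (in_list G r em)). src G e \<noteq> r \<and> mark_ok om (nmk G (src G e))"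
    using a2 si unfolding in_list_def by auto
  show "c \<le> 15"
    using cc try_root_cost[of \<sigma> G t rm om em r] scan_cost_ok[OF o1, of 4] scan_cost_ok[OF o2, of 4]
    by linarith
qed

definition Base :: "hgraph \<Rightarrow> bool" where
  "Base G \<longleftrightarrow> wf_hgraph G \<and> (\<forall>v\<in>nodes G. nmk G v = NGrey \<or> nmk G v = NBlue)
     \<and> (\<exists>r. roots G = {r} \<and> nmk G r = NBlue)
     \<and> (\<forall>e\<in>edges G. emk G e = EDashed \<longrightarrow> nmk G (src G e) = NBlue \<and> nmk G (tgt G e) = NBlue)"

definition redset :: "hgraph \<Rightarrow> nat set" where
  "redset G = {e\<in>edges G. emk G e = ERed}"

definition Inv :: "hgraph \<Rightarrow> bool" where
  "Inv G \<longleftrightarrow> Base G \<and> redset G = {}"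

definition Inv1 :: "hgraph \<Rightarrow> bool" where
  "Inv1 G \<longleftrightarrow> Base G \<and> (\<exists>e. redset G \<subseteq> {e})"

definition cnt :: "hgraph \<Rightarrow> emark \<Rightarrow> nat" where
  "cnt G m = card {e\<in>edges G. emk G e = m}"

lemma cnt_upd_aux:
  assumes "finite E" "e \<in> E"
  shows "card {x\<in>E. (f(e:=b)) x = a} + (if f e = a then 1 else 0)
       = card {x\<in>E. f x = a} + (if b = a then 1 else 0)"
proof -
  let ?S = "{x\<in>E - {e}. f x = a}"
  have fS: "finite ?S" using assms by simp
  have eS: "e \<notin> ?S" by simp
  have A: "{x\<in>E. (f(e:=b)) x = a} = (if b = a then insert e ?S else ?S)"
    using assms by auto
  have B: "{x\<in>E. f x = a} = (if f e = a then insert e ?S else ?S)"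
    using assms by auto
  show ?thesis unfolding A B using fS eS by (simp add: card_insert_if)
qed

lemma base_upd:
  assumes B: "Base G" and rt: "roots G = {r}" and e: "e \<in> edges G" and wn: "w \<in> nodes G"
    and ends: "src G e = r \<and> tgt G e = w \<or> tgt G e = r \<and> src G e = w"
    and mw: "mw = NBlue \<or> mw = nmk G w" and rb: "nmk G r = NBlue"
    and md: "m' = EDashed \<longrightarrow> mw = NBlue"
    and z: "z = r \<or> (z = w \<and> mw = NBlue)"
  shows "Base (G\<lparr>nmk := ((nmk G)(r := NBlue))(w := mw), emk := (emk G)(e := m'), roots := {z}\<rparr>)"
proof -
  have wf: "wf_hgraph G" using B unfolding Base_def by blast
  have rn: "r \<in> nodes G" using wf rt unfolding wf_hgraph_def by auto
  have zn: "z \<in> nodes G" using z rn wn by auto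
  have m1: "\<forall>v\<in>nodes G. nmk G v = NGrey \<or> nmk G v = NBlue" using B unfolding Base_def by blast
  have d1: "\<forall>x\<in>edges G. emk G x = EDashed \<longrightarrow> nmk G (src G x) = NBlue \<and> nmk G (tgt G x) = NBlue"
    using B unfolding Base_def by blast
  let ?n = "((nmk G)(r := NBlue))(w := mw)"
  have blue: "\<And>v. nmk G v = NBlue \<Longrightarrow> ?n v = NBlue" using mw by auto
  have zb: "?n z = NBlue" using z mw rb by auto
  show ?thesis
    unfolding Base_def
  proof (intro conjI)
    show "wf_hgraph (G\<lparr>nmk := ?n, emk := (emk G)(e := m'), roots := {z}\<rparr>)"
      using wf zn unfolding wf_hgraph_def by simp
    show "\<forall>v\<in>nodes (G\<lparr>nmk := ?n, emk := (emk G)(e := m'), roots := {z}\<rparr>).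
      nmk (G\<lparr>nmk := ?n, emk := (emk G)(e := m'), roots := {z}\<rparr>) v = NGrey \<or>
      nmk (G\<lparr>nmk := ?n, emk := (emk G)(e := m'), roots := {z}\<rparr>) v = NBlue"
      using m1 mw wn by auto
    show "\<exists>r'. roots (G\<lparr>nmk := ?n, emk := (emk G)(e := m'), roots := {z}\<rparr>) = {r'} \<and>
        nmk (G\<lparr>nmk := ?n, emk := (emk G)(e := m'), roots := {z}\<rparr>) r' = NBlue"
      using zb by simp
    show "\<forall>x\<in>edges (G\<lparr>nmk := ?n, emk := (emk G)(e := m'), roots := {z}\<rparr>).
       emk (G\<lparr>nmk := ?n, emk := (emk G)(e := m'), roots := {z}\<rparr>) x = EDashed \<longrightarrow>
       nmk (G\<lparr>nmk := ?n, emk := (emk G)(e := m'), roots := {z}\<rparr>) (src (G\<lparr>nmk := ?n, emk := (emk G)(e := m'), roots := {z}\<rparr>) x) = NBlue \<and>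
       nmk (G\<lparr>nmk := ?n, emk := (emk G)(e := m'), roots := {z}\<rparr>) (tgt (G\<lparr>nmk := ?n, emk := (emk G)(e := m'), roots := {z}\<rparr>) x) = NBlue"
    proof
      fix x assume xe: "x \<in> edges (G\<lparr>nmk := ?n, emk := (emk G)(e := m'), roots := {z}\<rparr>)"
      show "emk (G\<lparr>nmk := ?n, emk := (emk G)(e := m'), roots := {z}\<rparr>) x = EDashed \<longrightarrow>
       nmk (G\<lparr>nmk := ?n, emk := (emk G)(e := m'), roots := {z}\<rparr>) (src (G\<lparr>nmk := ?n, emk := (emk G)(e := m'), roots := {z}\<rparr>) x) = NBlue \<and>
       nmk (G\<lparr>nmk := ?n, emk := (emk G)(e := m'), roots := {z}\<rparr>) (tgt (G\<lparr>nmk := ?n, emk := (emk G)(e := m'), roots := {z}\<rparr>) x) = NBlue"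
      proof (cases "x = e")
        case True
        then show ?thesis using md ends by auto
      next
        case False
        then show ?thesis using d1 xe blue by simp
      qed
    qed
  qed
qed

lemma call1:
  assumes "call_rules \<sigma> G t [\<rho>] = (res, c)"
  obtains mt c0 where "search \<sigma> G t \<rho> = (Some mt, c0)" "res = Some (apply_rule \<rho> G mt)" "c = c0 + 1"
    | c0 where "search \<sigma> G t \<rho> = (None, c0)" "res = None" "c = c0"
  using assms by (auto split: prod.splits option.splits)

lemma call2:
  assumes "call_rules \<sigma> G t [\<rho>1, \<rho>2] = (res, c)"
  obtains mt c0 where "search \<sigma> G t \<rho>1 = (Some mt, c0)" "res = Some (apply_rule \<rho>1 G mt)" "c = c0 + 1"
    | mt c0 c1 where "search \<sigma> G t \<rho>1 = (None, c0)" "search \<sigma> G (t + c0) \<rho>2 = (Some mt, c1)"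
         "res = Some (apply_rule \<rho>2 G mt)" "c = c0 + c1 + 1"
    | c0 c1 where "search \<sigma> G t \<rho>1 = (None, c0)" "search \<sigma> G (t + c0) \<rho>2 = (None, c1)"
         "res = None" "c = c0 + c1"
  using assms by (auto split: prod.splits option.splits)

lemma next_edge_step:
  assumes I: "Inv G" and vs: "valid_sched \<sigma>" and cr: "call_rules \<sigma> G t [r_next_edge] = (res, c)"
  shows "c \<le> 16 \<and> (\<forall>G'. res = Some G' \<longrightarrow> Inv1 G' \<and> cnt G' EUnmarked + 1 = cnt G EUnmarked
            \<and> cnt G' EDashed = cnt G EDashed)"
proof -
  have B: "Base G" and nr: "redset G = {}" using I unfolding Inv_def by auto
  have wf: "wf_hgraph G" using B unfolding Base_def by blast
  have fe: "finite (edges G)" using wf unfolding wf_hgraph_def by blast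
  obtain r where rt: "roots G = {r}" and rb: "nmk G r = NBlue" using B unfolding Base_def by blast
  have m1: "\<forall>v\<in>nodes G. nmk G v = NGrey \<or> nmk G v = NBlue" using B unfolding Base_def by blast
  have ok1: "\<forall>e\<in>out_list G r EUnmarked. mark_ok None (nmk G (tgt G e))"
    using m1 wf unfolding out_list_def wf_hgraph_def mark_ok_def by fastforce
  have ok2: "\<forall>e\<in>in_list G r EUnmarked. mark_ok None (nmk G (src G e))"
    using m1 wf unfolding in_list_def wf_hgraph_def mark_ok_def by fastforce
  show ?thesis
  proof (cases rule: call1[OF cr])
    case (1 mt c0)
    have "c0 \<le> 15" using edge_search_cost(2)[OF vs wf rt 1(1)[unfolded r_next_edge_def]] ok1 ok2 by blast
    moreover obtain e where e: "mt = MEdge r e \<and> e \<in> edges G \<and> emk G e = EUnmarked \<and> nmk G r = NBlue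
     \<and> other_end G r e \<noteq> r \<and> mark_ok None (nmk G (other_end G r e)) \<and> other_end G r e \<in> nodes G
     \<and> r \<in> nodes G \<and> (src G e = r \<and> tgt G e = other_end G r e \<or> tgt G e = r \<and> src G e = other_end G r e)"
      using edge_search_some[OF vs wf rt 1(1)[unfolded r_next_edge_def]] by blast
    define w where "w = other_end G r e"
    have G': "apply_rule r_next_edge G mt = G\<lparr>nmk := ((nmk G)(r := NBlue))(w := nmk G w), emk := (emk G)(e := ERed), roots := {r}\<rparr>"
      using e rt unfolding r_next_edge_def w_def by (simp add: Let_def set_root_def)
    have "Base (apply_rule r_next_edge G mt)"
      unfolding G' by (rule base_upd[OF B rt]) (use e w_def rb in auto)
    moreover have "redset (apply_rule r_next_edge G mt) \<subseteq> {e}"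
      using nr unfolding G' redset_def by auto
    moreover have "cnt (apply_rule r_next_edge G mt) EUnmarked + 1 = cnt G EUnmarked"
      using cnt_upd_aux[OF fe, of e "emk G" ERed EUnmarked] e unfolding G' cnt_def by simp
    moreover have "cnt (apply_rule r_next_edge G mt) EDashed = cnt G EDashed"
      using cnt_upd_aux[OF fe, of e "emk G" ERed EDashed] e unfolding G' cnt_def by simp
    ultimately show ?thesis using 1 unfolding Inv1_def by auto
  next
    case (2 c0)
    have "c0 \<le> 15" using edge_search_cost(2)[OF vs wf rt 2(1)[unfolded r_next_edge_def]] ok1 ok2 by blast
    then show ?thesis using 2 by auto
  qed
qed

lemma card_le1: "A \<subseteq> {x} \<Longrightarrow> card A \<le> 1"
  using card_mono[of "{x}" A] by simp

lemma move_step: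
  assumes I: "Inv1 G" and vs: "valid_sched \<sigma>" and cr: "call_rules \<sigma> G t [r_move, r_ignore] = (res, c)"
  shows "c \<le> 31 \<and> (\<forall>G'. res = Some G' \<longrightarrow> Inv G' \<and> cnt G' EUnmarked = cnt G EUnmarked
            \<and> cnt G' EDashed \<le> cnt G EDashed + 1)"
proof -
  have B: "Base G" using I unfolding Inv1_def by auto
  obtain e0 where nr: "redset G \<subseteq> {e0}" using I unfolding Inv1_def by auto
  have wf: "wf_hgraph G" using B unfolding Base_def by blast
  have fe: "finite (edges G)" using wf unfolding wf_hgraph_def by blast
  obtain r where rt: "roots G = {r}" and rb: "nmk G r = NBlue" using B unfolding Base_def by blast
  have co: "card (out_list G r ERed) \<le> 1"
    using nr by (intro card_le1[of _ e0]) (auto simp: out_list_def redset_def)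
  have ci: "card (in_list G r ERed) \<le> 1"
    using nr by (intro card_le1[of _ e0]) (auto simp: in_list_def redset_def)
  have cost: "\<And>t rho mt c0. rho \<in> {r_move, r_ignore} \<Longrightarrow> search \<sigma> G t rho = (mt, c0) \<Longrightarrow> c0 \<le> 15"
  proof -
    fix t rho mt c0 assume a: "rho \<in> {r_move, r_ignore}" "search \<sigma> G t rho = (mt, c0)"
    then obtain rm om rm' om' em' rr' or' where "search \<sigma> G t (EdgeRule rm om ERed rm' om' em' rr' or') = (mt, c0)"
      unfolding r_move_def r_ignore_def by auto
    from edge_search_cost(1)[OF vs wf rt this] co ci show "c0 \<le> 15" by linarith
  qed
  have post: "Inv G' \<and> cnt G' EUnmarked = cnt G EUnmarked \<and> cnt G' EDashed \<le> cnt G EDashed + 1"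
    if a: "rho \<in> {r_move, r_ignore}" "search \<sigma> G t' rho = (Some mt, c0)" "G' = apply_rule rho G mt" for rho t' mt c0 G'
  proof -
    obtain om rm' om' em' rr' or' where rho: "rho = EdgeRule NBlue om ERed rm' om' em' rr' or'"
      using a(1) unfolding r_move_def r_ignore_def by blast
    obtain e where e: "mt = MEdge r e \<and> e \<in> edges G \<and> emk G e = ERed \<and> nmk G r = NBlue
     \<and> other_end G r e \<noteq> r \<and> mark_ok om (nmk G (other_end G r e)) \<and> other_end G r e \<in> nodes G
     \<and> r \<in> nodes G \<and> (src G e = r \<and> tgt G e = other_end G r e \<or> tgt G e = r \<and> src G e = other_end G r e)"
      using edge_search_some[OF vs wf rt a(2)[unfolded rho]] by blast
    define w where "w = other_end G r e"
    have red: "redset G = {e}" using nr e unfolding redset_def by auto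
    have G': "G' = G\<lparr>nmk := ((nmk G)(r := NBlue))(w := NBlue), emk := (emk G)(e := (if rho = r_move then EDashed else EBlue)),
        roots := {if rho = r_move then w else r}\<rparr>"
    proof (cases "rho = r_move")
      case True
      then show ?thesis using a(3) e rt unfolding w_def by (simp add: r_move_def Let_def set_root_def)
    next
      case False
      then have "rho = r_ignore" using a(1) by auto
      then show ?thesis using a(3) e rt unfolding w_def by (simp add: r_move_def r_ignore_def Let_def set_root_def)
    qed
    have "Base G'"
      unfolding G' by (rule base_upd[OF B rt]) (use e w_def rb in auto)
    moreover have "redset G' = {}"
      using red unfolding G' redset_def by auto
    moreover have "cnt G' EUnmarked = cnt G EUnmarked"
      using cnt_upd_aux[OF fe, of e "emk G" "if rho = r_move then EDashed else EBlue" EUnmarked] e unfolding G' cnt_def by simp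
    moreover have "cnt G' EDashed \<le> cnt G EDashed + 1"
      using cnt_upd_aux[OF fe, of e "emk G" "if rho = r_move then EDashed else EBlue" EDashed] e unfolding G' cnt_def by simp
    ultimately show ?thesis unfolding Inv_def by auto
  qed
  show ?thesis
  proof (cases rule: call2[OF cr])
    case (1 mt c0)
    then show ?thesis using cost[of r_move t "Some mt" c0] post[of r_move t mt c0] by auto
  next
    case (2 mt c0 c1)
    then show ?thesis using cost[of r_move t None c0] cost[of r_ignore "t + c0" "Some mt" c1]
      post[of r_ignore "t + c0" mt c1] by auto
  next
    case (3 c0 c1)
    then show ?thesis using cost[of r_move t None c0] cost[of r_ignore "t + c0" None c1] by auto
  qed
qed

lemma back_step:
  assumes I: "Inv G" and vs: "valid_sched \<sigma>" and cr: "call_rules \<sigma> G t [r_back] = (res, c)"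
  shows "c \<le> 16 \<and> (\<forall>G'. res = Some G' \<longrightarrow> Inv G' \<and> cnt G' EUnmarked = cnt G EUnmarked
            \<and> cnt G' EDashed + 1 = cnt G EDashed)"
proof -
  have B: "Base G" and nr: "redset G = {}" using I unfolding Inv_def by auto
  have wf: "wf_hgraph G" using B unfolding Base_def by blast
  have fe: "finite (edges G)" using wf unfolding wf_hgraph_def by blast
  obtain r where rt: "roots G = {r}" and rb: "nmk G r = NBlue" using B unfolding Base_def by blast
  have d1: "\<forall>x\<in>edges G. emk G x = EDashed \<longrightarrow> nmk G (src G x) = NBlue \<and> nmk G (tgt G x) = NBlue"
    using B unfolding Base_def by blast
  have ok1: "\<forall>e\<in>out_list G r EDashed. mark_ok (Some NBlue) (nmk G (tgt G e))"
    using d1 unfolding out_list_def mark_ok_def by fastforce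
  have ok2: "\<forall>e\<in>in_list G r EDashed. mark_ok (Some NBlue) (nmk G (src G e))"
    using d1 unfolding in_list_def mark_ok_def by fastforce
  show ?thesis
  proof (cases rule: call1[OF cr])
    case (1 mt c0)
    have "c0 \<le> 15" using edge_search_cost(2)[OF vs wf rt 1(1)[unfolded r_back_def]] ok1 ok2 by blast
    moreover obtain e where e: "mt = MEdge r e \<and> e \<in> edges G \<and> emk G e = EDashed \<and> nmk G r = NBlue
     \<and> other_end G r e \<noteq> r \<and> mark_ok (Some NBlue) (nmk G (other_end G r e)) \<and> other_end G r e \<in> nodes G
     \<and> r \<in> nodes G \<and> (src G e = r \<and> tgt G e = other_end G r e \<or> tgt G e = r \<and> src G e = other_end G r e)"
      using edge_search_some[OF vs wf rt 1(1)[unfolded r_back_def]] by blast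
    define w where "w = other_end G r e"
    have G': "apply_rule r_back G mt = G\<lparr>nmk := ((nmk G)(r := NBlue))(w := NBlue), emk := (emk G)(e := EBlue), roots := {w}\<rparr>"
      using e rt unfolding r_back_def w_def by (auto simp add: Let_def set_root_def)
    have "Base (apply_rule r_back G mt)"
      unfolding G' by (rule base_upd[OF B rt]) (use e w_def rb in auto)
    moreover have "redset (apply_rule r_back G mt) = {}"
      using nr unfolding G' redset_def by auto
    moreover have "cnt (apply_rule r_back G mt) EUnmarked = cnt G EUnmarked"
      using cnt_upd_aux[OF fe, of e "emk G" EBlue EUnmarked] e unfolding G' cnt_def by simp
    moreover have "cnt (apply_rule r_back G mt) EDashed + 1 = cnt G EDashed"
      using cnt_upd_aux[OF fe, of e "emk G" EBlue EDashed] e unfolding G' cnt_def by simp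
    ultimately show ?thesis using 1 unfolding Inv_def by auto
  next
    case (2 c0)
    have "c0 \<le> 15" using edge_search_cost(2)[OF vs wf rt 2(1)[unfolded r_back_def]] ok1 ok2 by blast
    then show ?thesis using 2 by auto
  qed
qed

lemma match_cost: "call_rules \<sigma> G t [r_match] = (res, c) \<Longrightarrow> c \<le> 2"
  unfolding r_match_def by (auto split: prod.splits option.splits list.splits)

lemma init_step:
  assumes wf: "wf_hgraph G" and gr: "\<forall>v\<in>nodes G. nmk G v = NGrey" and nr: "roots G = {}"
    and um: "\<forall>e\<in>edges G. emk G e = EUnmarked" and vs: "valid_sched \<sigma>"
    and cr: "call_rules \<sigma> G t [r_init] = (res, c)"
  shows "c \<le> 2 \<and> (\<forall>G'. res = Some G' \<longrightarrow> Inv G')"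
proof -
  have fn: "finite {v\<in>nodes G. nmk G v = NGrey}" using wf unfolding wf_hgraph_def by simp
  note L = vs_fst[OF vs fn, of t]
  show ?thesis
  proof (cases "fst \<sigma> t {v\<in>nodes G. nmk G v = NGrey}")
    case Nil
    then show ?thesis using cr unfolding r_init_def by auto
  next
    case (Cons v vs')
    have vn: "v \<in> nodes G" "nmk G v = NGrey" using L Cons by auto
    have res: "res = Some (G\<lparr>nmk := (nmk G)(v := NBlue), roots := {v}\<rparr>)" and "c = 2"
      using cr Cons nr unfolding r_init_def by (auto simp: set_root_def)
    moreover have "Inv (G\<lparr>nmk := (nmk G)(v := NBlue), roots := {v}\<rparr>)"
      using wf vn gr um unfolding Inv_def Base_def redset_def wf_hgraph_def by auto
    ultimately show ?thesis by auto
  qed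
qed

lemma exec_callE:
  assumes "exec \<sigma> (Call rs) G t res t' k"
  obtains G' c where "res = Ok G'" "call_rules \<sigma> G t rs = (Some G', c)" "t' = t + c" "k = 1"
    | c where "res = Failed" "call_rules \<sigma> G t rs = (None, c)" "t' = t + c" "k = 0"
  using assms by (cases rule: exec.cases) auto

lemma exec_seqE:
  assumes "exec \<sigma> (Seq P Q) G t res t' k"
  obtains G1 t1 k1 k2 where "exec \<sigma> P G t (Ok G1) t1 k1" "exec \<sigma> Q G1 t1 res t' k2" "k = k1 + k2"
    | "res = Failed" "exec \<sigma> P G t Failed t' k"
    | G1 where "res = Brk G1" "exec \<sigma> P G t (Brk G1) t' k"
  using assms by (cases rule: exec.cases) auto

lemma exec_tryE:
  assumes "exec \<sigma> (Try C P Q) G t res t' k"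
  obtains G1 t1 k1 k2 where "exec \<sigma> C G t (Ok G1) t1 k1" "exec \<sigma> P G1 t1 res t' k2" "k = k1 + k2"
    | t1 k1 where "exec \<sigma> C G t Failed t1 k1" "exec \<sigma> Q G (t1 + k1) res t' k"
    | G1 where "res = Brk G1" "exec \<sigma> C G t (Brk G1) t' k"
  using assms by (cases rule: exec.cases) auto

lemma exec_ifE:
  assumes "exec \<sigma> (If C P Q) G t res t' k"
  obtains G1 t1 k1 where "exec \<sigma> C G t (Ok G1) t1 k1" "exec \<sigma> P G (t1 + k1) res t' k"
    | t1 k1 where "exec \<sigma> C G t Failed t1 k1" "exec \<sigma> Q G (t1 + k1) res t' k"
    | G1 where "res = Brk G1" "exec \<sigma> C G t (Brk G1) t' k"
  using assms by (cases rule: exec.cases) auto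

lemma exec_skipE: "exec \<sigma> Skip G t res t' k \<Longrightarrow> res = Ok G \<and> t' = t \<and> k = 0"
  by (cases rule: exec.cases) auto

lemma exec_failE: "exec \<sigma> Fail G t res t' k \<Longrightarrow> res = Failed \<and> t' = t \<and> k = 0"
  by (cases rule: exec.cases) auto

lemma exec_breakE: "exec \<sigma> Break G t res t' k \<Longrightarrow> res = Brk G \<and> t' = t \<and> k = 0"
  by (cases rule: exec.cases) auto

definition Phi :: "hgraph \<Rightarrow> nat" where
  "Phi G = 200 * cnt G EUnmarked + 100 * cnt G EDashed"

lemma fwd:
  assumes I: "Inv G" and vs: "valid_sched \<sigma>" and ex: "exec \<sigma> FORWARD G t res t' k"
  shows "(\<exists>G'. res = Ok G' \<and> Inv G' \<and> Phi G' + 100 \<le> Phi G \<and> t' \<le> t + 47)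
       \<or> (res = Failed \<and> t' + k \<le> t + 48)"
  using ex unfolding FORWARD_def
proof (cases rule: exec_seqE)
  case (1 G1 t1 k1 k2)
  note o1 = 1
  from 1(1) show ?thesis
  proof (cases rule: exec_callE)
    case (1 G1' c)
    have g1: "G1' = G1" using 1(1) by simp
    note n = next_edge_step[OF I vs 1(2)[unfolded g1]]
    have i1: "Inv1 G1" and u1: "cnt G1 EUnmarked + 1 = cnt G EUnmarked" and d1: "cnt G1 EDashed = cnt G EDashed"
      and c1: "c \<le> 16" using n by auto
    have tt: "t1 = t + c" "k1 = 1" using 1 by auto
    from o1(2) show ?thesis
    proof (cases rule: exec_callE)
      case (1 G2 c')
      note m = move_step[OF i1 vs 1(2)]
      show ?thesis using m 1 tt u1 d1 c1 unfolding Phi_def by fastforce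
    next
      case (2 c')
      note m = move_step[OF i1 vs 2(2)]
      show ?thesis using m 2 tt c1 o1(3) by auto
    qed
  next
    case (2 c)
    then show ?thesis by simp
  qed
next
  case 2
  from 2(2) show ?thesis
  proof (cases rule: exec_callE)
    case (1 G' c)
    then show ?thesis using 2 by simp
  next
    case (2 c)
    then show ?thesis using next_edge_step[OF I vs 2(2)] \<open>res = Failed\<close> by auto
  qed
next
  case (3 G1)
  from 3(2) show ?thesis by (cases rule: exec_callE) auto
qed

lemma loopF:
  assumes "exec \<sigma> (Loop FORWARD) G t res t' k" "Inv G" "valid_sched \<sigma>"
  shows "\<exists>G'. res = Ok G' \<and> Inv G' \<and> Phi G' \<le> Phi G \<and> t' + Phi G' \<le> t + Phi G + 48"
  using assms
proof (induction "Loop FORWARD" G t res t' k rule: exec.induct)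
  case (loop_ok G t G1 t1 k1 res t2 k2)
  have f: "Inv G1 \<and> Phi G1 + 100 \<le> Phi G \<and> t1 \<le> t + 47" using fwd[OF loop_ok.prems(1,2) loop_ok.hyps(1)] by auto
  then obtain G' where "res = Ok G' \<and> Inv G' \<and> Phi G' \<le> Phi G1 \<and> t2 + Phi G' \<le> t1 + Phi G1 + 48"
    using loop_ok.hyps loop_ok.prems(2) by blast
  then show ?case using f by auto
next
  case (loop_fail G t t1 k1)
  then show ?case using fwd[OF loop_fail.prems(1,2) loop_fail.hyps(1)] by auto
next
  case (loop_brk G t G1 t1 k1)
  then show ?case using fwd[OF loop_brk.prems(1,2) loop_brk.hyps(1)] by auto
qed

lemma dfs:
  assumes I: "Inv G" and vs: "valid_sched \<sigma>" and ex: "exec \<sigma> DFS G t res t' k"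
  shows "(\<exists>G'. res = Ok G' \<and> Inv G' \<and> t' + Phi G' \<le> t + Phi G \<and> Phi G' < Phi G)
       \<or> (\<exists>G'. res = Brk G' \<and> t' \<le> t + Phi G + 64)"
  using ex unfolding DFS_def
proof (cases rule: exec_seqE)
  case (1 G1 t1 k1 k2)
  have l: "Inv G1 \<and> Phi G1 \<le> Phi G \<and> t1 + Phi G1 \<le> t + Phi G + 48" using loopF[OF 1(1) I vs] by auto
  from 1(2) show ?thesis
  proof (cases rule: exec_tryE)
    case (1 G2 t2 k3 k4)
    from 1(1) obtain c where c: "call_rules \<sigma> G1 t1 [r_back] = (Some G2, c)" "t2 = t1 + c"
      by (cases rule: exec_callE) auto
    have b: "c \<le> 16 \<and> Inv G2 \<and> Phi G2 + 100 = Phi G1"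
      using back_step[OF _ vs c(1)] l unfolding Phi_def by auto
    have "res = Ok G2 \<and> t' = t2" using exec_skipE[OF 1(2)] by auto
    then show ?thesis using b l c(2) by auto
  next
    case (2 t2 k3)
    from 2(1) obtain c where c: "call_rules \<sigma> G1 t1 [r_back] = (None, c)" "t2 = t1 + c" "k3 = 0"
      by (cases rule: exec_callE) auto
    have b: "c \<le> 16" using back_step[OF _ vs c(1)] l by auto
    have "res = Brk G1 \<and> t' = t2 + k3" using exec_breakE[OF 2(2)] by auto
    then show ?thesis using b l c by auto
  next
    case (3 G2)
    from 3(2) show ?thesis by (cases rule: exec_callE) auto
  qed
next
  case 2
  then show ?thesis using loopF[OF 2(2) I vs] by auto
next
  case (3 G1)
  then show ?thesis using loopF[OF 3(2) I vs] by auto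
qed

lemma loopD:
  assumes "exec \<sigma> (Loop DFS) G t res t' k" "Inv G" "valid_sched \<sigma>"
  shows "t' \<le> t + Phi G + 64"
  using assms
proof (induction "Loop DFS" G t res t' k rule: exec.induct)
  case (loop_ok G t G1 t1 k1 res t2 k2)
  have f: "Inv G1 \<and> t1 + Phi G1 \<le> t + Phi G" using dfs[OF loop_ok.prems(1,2) loop_ok.hyps(1)] by auto
  then have "t2 \<le> t1 + Phi G1 + 64" using loop_ok.hyps loop_ok.prems(2) by blast
  then show ?case using f by auto
next
  case (loop_fail G t t1 k1)
  then show ?case using dfs[OF loop_fail.prems(1,2) loop_fail.hyps(1)] by auto
next
  case (loop_brk G t G1 t1 k1)
  then show ?case using dfs[OF loop_brk.prems(1,2) loop_brk.hyps(1)] by auto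
qed

lemma call_ex: "\<exists>res t' k. exec \<sigma> (Call rs) G t res t' k"
proof (cases "call_rules \<sigma> G t rs")
  case (Pair r c)
  then show ?thesis
  proof (cases r)
    case None
    have "call_rules \<sigma> G t rs = (None, c)" using Pair[unfolded None] .
    from exec.call_fail[OF this] show ?thesis by blast
  next
    case (Some G')
    have "call_rules \<sigma> G t rs = (Some G', c)" using Pair[unfolded Some] .
    from exec.call_ok[OF this] show ?thesis by blast
  qed
qed

lemma seq_ex:
  assumes "\<exists>res t' k. exec \<sigma> P G t res t' k" "\<And>G1 t1. \<exists>res t' k. exec \<sigma> Q G1 t1 res t' k"
  shows "\<exists>res t' k. exec \<sigma> (Seq P Q) G t res t' k"
proof -
  obtain res t1 k1 where e: "exec \<sigma> P G t res t1 k1" using assms(1) by blast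
  show ?thesis
  proof (cases res)
    case (Ok G1)
    obtain res2 t2 k2 where e2: "exec \<sigma> Q G1 t1 res2 t2 k2" using assms(2)[of G1 t1] by blast
    show ?thesis using exec.seq_ok[OF e[unfolded Ok] e2] by blast
  next
    case Failed
    show ?thesis using exec.seq_fail[OF e[unfolded Failed]] by blast
  next
    case (Brk G1)
    show ?thesis using exec.seq_brk[OF e[unfolded Brk]] by blast
  qed
qed

lemma fwd_ex: "\<exists>res t' k. exec \<sigma> FORWARD G t res t' k"
  unfolding FORWARD_def by (intro seq_ex call_ex)

lemma loopF_ex:
  assumes "Inv G" "valid_sched \<sigma>"
  shows "\<exists>res t' k. exec \<sigma> (Loop FORWARD) G t res t' k"
  using assms(1)
proof (induction "Phi G" arbitrary: G t rule: less_induct)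
  case less
  obtain res t1 k1 where e: "exec \<sigma> FORWARD G t res t1 k1" using fwd_ex by blast
  show ?case
  proof (cases res)
    case (Ok G1)
    then have "Inv G1 \<and> Phi G1 < Phi G" using fwd[OF less.prems assms(2) e] by auto
    then obtain res2 t2 k2 where e2: "exec \<sigma> (Loop FORWARD) G1 t1 res2 t2 k2" using less.hyps by blast
    show ?thesis using exec.loop_ok[OF e[unfolded Ok] e2] by blast
  next
    case Failed
    show ?thesis using exec.loop_fail[OF e[unfolded Failed]] by blast
  next
    case (Brk G1)
    show ?thesis using exec.loop_brk[OF e[unfolded Brk]] by blast
  qed
qed

lemma tryb_ex: "\<exists>res t' k. exec \<sigma> (Try (Call [r_back]) Skip Break) G t res t' k"
proof -
  obtain res t1 k1 where e: "exec \<sigma> (Call [r_back]) G t res t1 k1" using call_ex by blast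
  show ?thesis
  proof (cases res)
    case (Ok G1)
    show ?thesis using exec.try_ok[OF e[unfolded Ok] exec.skip] by blast
  next
    case Failed
    show ?thesis using exec.try_fail[OF e[unfolded Failed] exec.break] by blast
  next
    case (Brk G1)
    show ?thesis using exec.try_brk[OF e[unfolded Brk]] by blast
  qed
qed

lemma dfs_ex: "Inv G \<Longrightarrow> valid_sched \<sigma> \<Longrightarrow> \<exists>res t' k. exec \<sigma> DFS G t res t' k"
  unfolding DFS_def by (intro seq_ex loopF_ex tryb_ex)

lemma loopD_ex:
  assumes "Inv G" "valid_sched \<sigma>"
  shows "\<exists>res t' k. exec \<sigma> (Loop DFS) G t res t' k"
  using assms(1)
proof (induction "Phi G" arbitrary: G t rule: less_induct)
  case less
  obtain res t1 k1 where e: "exec \<sigma> DFS G t res t1 k1" using dfs_ex[OF less.prems assms(2)] by blast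
  show ?case
  proof (cases res)
    case (Ok G1)
    then have "Inv G1 \<and> Phi G1 < Phi G" using dfs[OF less.prems assms(2) e] by auto
    then obtain res2 t2 k2 where e2: "exec \<sigma> (Loop DFS) G1 t1 res2 t2 k2" using less.hyps by blast
    show ?thesis using exec.loop_ok[OF e[unfolded Ok] e2] by blast
  next
    case Failed
    show ?thesis using exec.loop_fail[OF e[unfolded Failed]] by blast
  next
    case (Brk G1)
    show ?thesis using exec.loop_brk[OF e[unfolded Brk]] by blast
  qed
qed

lemma check_ex: "\<exists>res t' k. exec \<sigma> Check G t res t' k"
proof -
  obtain res t1 k1 where e: "exec \<sigma> (Call [r_match]) G t res t1 k1" using call_ex by blast
  show ?thesis unfolding Check_def
  proof (cases res)
    case (Ok G1)
    then show "\<exists>res t' k. exec \<sigma> (If (Call [r_match]) Fail Skip) G t res t' k"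
      using exec.if_ok[OF e[unfolded Ok] exec.fail] by blast
  next
    case Failed
    then show "\<exists>res t' k. exec \<sigma> (If (Call [r_match]) Fail Skip) G t res t' k"
      using exec.if_fail[OF e[unfolded Failed] exec.skip] by blast
  next
    case (Brk G1)
    then show "\<exists>res t' k. exec \<sigma> (If (Call [r_match]) Fail Skip) G t res t' k"
      using exec.if_brk[OF e[unfolded Brk]] by blast
  qed
qed

lemma match_exec:
  assumes "exec \<sigma> (Call [r_match]) G t res t' k" shows "t' + k \<le> t + 3"
  using assms
proof (cases rule: exec_callE)
  case (1 G' c)
  from match_cost[OF 1(2)] 1(3) 1(4) show ?thesis by linarith
next
  case (2 c)
  from match_cost[OF 2(2)] 2(3) 2(4) show ?thesis by linarith
qed

lemma init_exec:
  assumes "exec \<sigma> (Call [r_init]) G t res t' k"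
    and "\<And>res c. call_rules \<sigma> G t [r_init] = (res, c) \<Longrightarrow> c \<le> 2"
  shows "t' + k \<le> t + 3"
  using assms(1)
proof (cases rule: exec_callE)
  case (1 G' c)
  from assms(2)[OF 1(2)] 1(3) 1(4) show ?thesis by linarith
next
  case (2 c)
  from assms(2)[OF 2(2)] 2(3) 2(4) show ?thesis by linarith
qed

lemma check_cost: "exec \<sigma> Check G t res t' k \<Longrightarrow> t' \<le> t + 3"
  unfolding Check_def
proof (erule exec_ifE)
  fix G1 t1 k1 assume a: "exec \<sigma> (Call [r_match]) G t (Ok G1) t1 k1" "exec \<sigma> Fail G (t1 + k1) res t' k"
  from a(1) have "t1 + k1 \<le> t + 3" by (rule match_exec)
  then show ?thesis using exec_failE[OF a(2)] by auto
next
  fix t1 k1 assume a: "exec \<sigma> (Call [r_match]) G t Failed t1 k1" "exec \<sigma> Skip G (t1 + k1) res t' k"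
  from a(1) have "t1 + k1 \<le> t + 3" by (rule match_exec)
  then show ?thesis using exec_skipE[OF a(2)] by auto
next
  fix G1 assume "exec \<sigma> (Call [r_match]) G t (Brk G1) t' k"
  then show ?thesis by (cases rule: exec_callE) auto
qed

lemma init_edges: "call_rules \<sigma> G t [r_init] = (Some G1, c) \<Longrightarrow> edges G1 = edges G"
  unfolding r_init_def by (auto split: list.splits)

lemma cnt_le: "finite (edges G) \<Longrightarrow> cnt G m \<le> card (edges G)"
  unfolding cnt_def by (rule card_mono) auto

lemma phi_bound: "Inv G \<Longrightarrow> Phi G \<le> 300 * card (edges G)"
proof -
  assume "Inv G"
  then have "finite (edges G)" unfolding Inv_def Base_def wf_hgraph_def by blast
  then show ?thesis unfolding Phi_def using cnt_le[of G EUnmarked] cnt_le[of G EDashed] by linarith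
qed

theorem mainTheorem2:
  "\<exists>c::nat. \<forall>G \<sigma>.
     wf_hgraph G \<and> (\<forall>v\<in>nodes G. nmk G v = NGrey) \<and> roots G = {}
     \<and> (\<forall>e\<in>edges G. emk G e = EUnmarked) \<and> valid_sched \<sigma>
     \<longrightarrow> (\<exists>res t k. exec \<sigma> is_connected G 0 res t k)
       \<and> (\<forall>res t k. exec \<sigma> is_connected G 0 res t k
              \<longrightarrow> t \<le> c * (card (nodes G) + card (edges G)) + c)"
proof (intro exI[of _ "400::nat"] allI impI)
  fix G \<sigma>
  assume A: "wf_hgraph G \<and> (\<forall>v\<in>nodes G. nmk G v = NGrey) \<and> roots G = {}
     \<and> (\<forall>e\<in>edges G. emk G e = EUnmarked) \<and> valid_sched \<sigma>"
  then have wf: "wf_hgraph G" and gr: "\<forall>v\<in>nodes G. nmk G v = NGrey" and nr: "roots G = {}"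
    and um: "\<forall>e\<in>edges G. emk G e = EUnmarked" and vs: "valid_sched \<sigma>" by auto
  note ist = init_step[OF wf gr nr um vs]
  show "(\<exists>res t k. exec \<sigma> is_connected G 0 res t k)
       \<and> (\<forall>res t k. exec \<sigma> is_connected G 0 res t k
              \<longrightarrow> t \<le> 400 * (card (nodes G) + card (edges G)) + 400)"
  proof
    show "\<exists>res t k. exec \<sigma> is_connected G 0 res t k"
      unfolding is_connected_def
    proof (cases "call_rules \<sigma> G 0 [r_init]")
      case (Pair r c)
      show "\<exists>res t k. exec \<sigma> (Try (Call [r_init]) (Seq (Loop DFS) Check) Skip) G 0 res t k"
      proof (cases r)
        case None
        have "call_rules \<sigma> G 0 [r_init] = (None, c)" using Pair[unfolded None] .
        from exec.try_fail[OF exec.call_fail[OF this] exec.skip] show ?thesis by blast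
      next
        case (Some G1)
        have I1: "Inv G1" using ist[OF Pair] Some by auto
        have e1: "exec \<sigma> (Call [r_init]) G 0 (Ok G1) (0 + c) 1" using exec.call_ok[OF Pair[unfolded Some]] .
        have "\<exists>res t k. exec \<sigma> (Seq (Loop DFS) Check) G1 (0 + c) res t k"
          by (intro seq_ex loopD_ex[OF I1 vs] check_ex)
        then obtain res t k where "exec \<sigma> (Seq (Loop DFS) Check) G1 (0 + c) res t k" by blast
        from exec.try_ok[OF e1 this] show ?thesis by blast
      qed
    qed
  next
    show "\<forall>res t k. exec \<sigma> is_connected G 0 res t k
              \<longrightarrow> t \<le> 400 * (card (nodes G) + card (edges G)) + 400"
    proof (intro allI impI)
      fix res t k assume e: "exec \<sigma> is_connected G 0 res t k"
      from e[unfolded is_connected_def] show "t \<le> 400 * (card (nodes G) + card (edges G)) + 400"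
      proof (cases rule: exec_tryE)
        case (1 G1 t1 k1 k2)
        from 1(1) obtain c where c: "call_rules \<sigma> G 0 [r_init] = (Some G1, c)" "t1 = c"
          by (cases rule: exec_callE) auto
        have I1: "Inv G1" and c2: "c \<le> 2" using ist[OF c(1)] by auto
        have ph: "Phi G1 \<le> 300 * card (edges G)" using phi_bound[OF I1] init_edges[OF c(1)] by simp
        have "t \<le> t1 + Phi G1 + 67"
          using 1(2)
        proof (cases rule: exec_seqE)
          case (1 G2 t2 k3 k4)
          then show ?thesis using loopD[OF 1(1) I1 vs] check_cost[OF 1(2)] by auto
        next
          case 2
          then show ?thesis using loopD[OF 2(2) I1 vs] by auto
        next
          case (3 G2)
          then show ?thesis using loopD[OF 3(2) I1 vs] by auto
        qed
        moreover have "300 * card (edges G) \<le> 400 * (card (nodes G) + card (edges G))" by simp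
        ultimately show ?thesis using ph c(2) c2 by linarith
      next
        case (2 t1 k1)
        have "t1 + k1 \<le> 0 + 3" by (rule init_exec[OF 2(1)]) (use ist in auto)
        then show ?thesis using exec_skipE[OF 2(2)] by auto
      next
        case (3 G1)
        from 3(2) show ?thesis by (cases rule: exec_callE) auto
      qed
    qed
  qed
qed

end
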